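(* Let $P$ be a finite poset, $q$ a positive integer, and $f\in\mathrm{Inc}^q(P)$. If $\mathrm{Con}(f)=(a_1,a_2,\dots,a_q)$, then $\mathrm{Con}(\mathrm{IncPro}(f))=(a_2,\dots,a_q,a_1)$.
   Context: $\mathrm{Inc}^q(P)$ is the set of $f:P\to\{1,\dots,q\}$ with $p_1<p_2\Rightarrow f(p_1)<f(p_2)$. The binary content $\mathrm{Con}(f)=(a_1,\dots,a_q)$ has $a_i=1$ if $f(p)=i$ for some $p\in P$ and $a_i=0$ otherwise. For $1\le i\le q-1$, $\rho_i(f)(x)=i+1$ if $f(x)=i$ and changing only the value at $x$ to $i+1$ yields an element of $\mathrm{Inc}^q(P)$; $\rho_i(f)(x)=i$ if $f(x)=i+1$ and changing only the value at $x$ to $i$ yields an element of $\mathrm{Inc}^q(P)$; $\rho_i(f)(x)=f(x)$ otherwise; $\mathrm{IncPro}=\rho_{q-1}\circ\cdots\circ\rho_1$. *)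

theory Defs
  imports Main
begin

text \<open>The finite poset P is a finite subset of a type with a partial order,
  carrying the induced order. Maps P \<rightarrow> {1..q} are functions 'a \<Rightarrow> nat whose
  values off P are irrelevant.\<close>

definition Inc :: "nat \<Rightarrow> 'a::order set \<Rightarrow> ('a \<Rightarrow> nat) set" where
  "Inc q P = {f. (\<forall>x\<in>P. 1 \<le> f x \<and> f x \<le> q) \<and>
                 (\<forall>x\<in>P. \<forall>y\<in>P. x < y \<longrightarrow> f x < f y)}"

definition Con :: "nat \<Rightarrow> 'a set \<Rightarrow> ('a \<Rightarrow> nat) \<Rightarrow> nat list" where
  "Con q P f = map (\<lambda>i. if (\<exists>p\<in>P. f p = i) then 1 else 0) [1..<q+1]"

definition rho :: "nat \<Rightarrow> 'a::order set \<Rightarrow> nat \<Rightarrow> ('a \<Rightarrow> nat) \<Rightarrow> ('a \<Rightarrow> nat)" where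
  "rho q P i f = (\<lambda>x.
     if x \<in> P \<and> f x = i \<and> f(x := i + 1) \<in> Inc q P then i + 1
     else if x \<in> P \<and> f x = i + 1 \<and> f(x := i) \<in> Inc q P then i
     else f x)"

definition IncPro :: "nat \<Rightarrow> 'a::order set \<Rightarrow> ('a \<Rightarrow> nat) \<Rightarrow> ('a \<Rightarrow> nat)" where
  "IncPro q P f = foldl (\<lambda>g i. rho q P i g) f [1..<q]"

end

theory Submission
  imports Defs
begin

lemma up_char:
  assumes g: "g \<in> Inc q P" and p: "p \<in> P" "g p = i" and iq: "i + 1 \<le> q"
  shows "g(p := i+1) \<in> Inc q P \<longleftrightarrow> \<not> (\<exists>y\<in>P. p < y \<and> g y = i+1)"
proof
  assume h: "g(p := i+1) \<in> Inc q P"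
  show "\<not> (\<exists>y\<in>P. p < y \<and> g y = i+1)"
  proof
    assume "\<exists>y\<in>P. p < y \<and> g y = i+1"
    then obtain y where "y \<in> P" "p < y" "g y = i+1" by blast
    moreover have "(g(p := i+1)) p < (g(p := i+1)) y" using h p \<open>y \<in> P\<close> \<open>p < y\<close> unfolding Inc_def by blast
    moreover have "y \<noteq> p" using \<open>p < y\<close> by auto
    ultimately show False using p by auto
  qed
next
  assume n: "\<not> (\<exists>y\<in>P. p < y \<and> g y = i+1)"
  show "g(p := i+1) \<in> Inc q P"
    unfolding Inc_def
  proof (safe)
    fix x assume "x \<in> P" thus "1 \<le> (g(p := i + 1)) x" "(g(p := i + 1)) x \<le> q"
      using g iq unfolding Inc_def by auto
  next
    fix x y assume xy: "x \<in> P" "y \<in> P" "x < y"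
    have gx: "g x < g y" using g xy unfolding Inc_def by auto
    show "(g(p := i + 1)) x < (g(p := i + 1)) y"
    proof (cases "x = p")
      case True
      hence "y \<noteq> p" using xy by auto
      moreover have "g y \<noteq> i+1" using n xy True by auto
      ultimately show ?thesis using True gx p by auto
    next
      case False
      show ?thesis
      proof (cases "y = p")
        case True thus ?thesis using False gx p by auto
      qed (use False gx in auto)
    qed
  qed
qed

lemma down_char:
  assumes g: "g \<in> Inc q P" and p: "p \<in> P" "g p = i+1" and iq: "1 \<le> i"
  shows "g(p := i) \<in> Inc q P \<longleftrightarrow> \<not> (\<exists>z\<in>P. z < p \<and> g z = i)"
proof
  assume h: "g(p := i) \<in> Inc q P"
  show "\<not> (\<exists>z\<in>P. z < p \<and> g z = i)"
  proof
    assume "\<exists>z\<in>P. z < p \<and> g z = i"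
    then obtain z where "z \<in> P" "z < p" "g z = i" by blast
    moreover have "(g(p := i)) z < (g(p := i)) p" using h p \<open>z \<in> P\<close> \<open>z < p\<close> unfolding Inc_def by blast
    moreover have "z \<noteq> p" using \<open>z < p\<close> by auto
    ultimately show False using p by auto
  qed
next
  assume n: "\<not> (\<exists>z\<in>P. z < p \<and> g z = i)"
  show "g(p := i) \<in> Inc q P"
    unfolding Inc_def
  proof (safe)
    fix x assume "x \<in> P" thus "1 \<le> (g(p := i)) x" "(g(p := i)) x \<le> q"
      using g iq p unfolding Inc_def by (auto dest!: bspec[of _ _ p])
  next
    fix x y assume xy: "x \<in> P" "y \<in> P" "x < y"
    have gx: "g x < g y" using g xy unfolding Inc_def by auto
    show "(g(p := i)) x < (g(p := i)) y"
    proof (cases "y = p")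
      case True
      hence "x \<noteq> p" using xy by auto
      moreover have "g x \<noteq> i" using n xy True by auto
      ultimately show ?thesis using True gx p by auto
    next
      case False
      show ?thesis
      proof (cases "x = p")
        case True thus ?thesis using False gx p by auto
      qed (use False gx in auto)
    qed
  qed
qed

lemma rho_eq:
  assumes g: "g \<in> Inc q P" and i: "1 \<le> i" "i + 1 \<le> q" and p: "p \<in> P"
  shows "rho q P i g p = (if g p = i \<and> \<not> (\<exists>y\<in>P. p < y \<and> g y = i+1) then i+1
     else if g p = i+1 \<and> \<not> (\<exists>z\<in>P. z < p \<and> g z = i) then i else g p)"
  using up_char[OF g p _ i(2)] down_char[OF g p _ i(1)] p unfolding rho_def by auto

lemma rho_Inc:
  assumes g: "g \<in> Inc q P" and i: "1 \<le> i" "i + 1 \<le> q"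
  shows "rho q P i g \<in> Inc q P"
proof -
  have b: "\<forall>x\<in>P. 1 \<le> g x \<and> g x \<le> q" and o: "\<forall>x\<in>P. \<forall>y\<in>P. x < y \<longrightarrow> g x < g y"
    using g unfolding Inc_def by auto
  show ?thesis unfolding Inc_def
  proof (safe)
    fix x assume "x \<in> P"
    thus "1 \<le> rho q P i g x" "rho q P i g x \<le> q"
      using rho_eq[OF g i] b i by auto
  next
    fix x y assume xy: "x \<in> P" "y \<in> P" "x < y"
    have gx: "g x < g y" using o xy by auto
    show "rho q P i g x < rho q P i g y"
      unfolding rho_eq[OF g i xy(1)] rho_eq[OF g i xy(2)]
      using gx xy by (auto)
  qed
qed

definition cc :: "'a set \<Rightarrow> ('a \<Rightarrow> nat) \<Rightarrow> nat \<Rightarrow> bool" where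
  "cc P g j = (\<exists>p\<in>P. g p = j)"

lemma rho_cc:
  assumes g: "g \<in> Inc q P" and i: "1 \<le> i" "i + 1 \<le> q"
  shows "cc P (rho q P i g) j = cc P g (if j = i then i+1 else if j = i+1 then i else j)"
proof -
  have R: "\<And>p. p \<in> P \<Longrightarrow> rho q P i g p = (if g p = i \<and> \<not> (\<exists>y\<in>P. p < y \<and> g y = i+1) then i+1
     else if g p = i+1 \<and> \<not> (\<exists>z\<in>P. z < p \<and> g z = i) then i else g p)"
    using rho_eq[OF g i] by blast
  have o: "\<forall>x\<in>P. \<forall>y\<in>P. x < y \<longrightarrow> g x < g y"
    using g unfolding Inc_def by auto
  consider "j = i" | "j = i+1" | "j \<noteq> i" "j \<noteq> i+1" by blast
  then show ?thesis
  proof cases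
    case 1
    show ?thesis
    proof
      assume "cc P (rho q P i g) j"
      then obtain p where p: "p \<in> P" "rho q P i g p = i" using 1 unfolding cc_def by auto
      show "cc P g (if j = i then i+1 else if j = i+1 then i else j)"
      proof (cases "g p = i+1")
        case True thus ?thesis using 1 p unfolding cc_def by auto
      next
        case False
        with p R[OF p(1)] obtain y where "y \<in> P" "g y = i+1" by (auto split: if_splits)
        thus ?thesis using 1 unfolding cc_def by auto
      qed
    next
      assume "cc P g (if j = i then i+1 else if j = i+1 then i else j)"
      then obtain p where p: "p \<in> P" "g p = i+1" using 1 unfolding cc_def by auto
      show "cc P (rho q P i g) j"
      proof (cases "\<exists>z\<in>P. z < p \<and> g z = i")
        case False thus ?thesis using 1 p R[OF p(1)] unfolding cc_def by auto
      next
        case True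
        then obtain z where z: "z \<in> P" "z < p" "g z = i" by blast
        have "rho q P i g z = i" using R[OF z(1)] z p by auto
        thus ?thesis using 1 z unfolding cc_def by auto
      qed
    qed
  next
    case 2
    show ?thesis
    proof
      assume "cc P (rho q P i g) j"
      then obtain p where p: "p \<in> P" "rho q P i g p = i+1" using 2 unfolding cc_def by auto
      show "cc P g (if j = i then i+1 else if j = i+1 then i else j)"
      proof (cases "g p = i")
        case True thus ?thesis using 2 p unfolding cc_def by auto
      next
        case False
        with p R[OF p(1)] obtain z where "z \<in> P" "g z = i" by (auto split: if_splits)
        thus ?thesis using 2 unfolding cc_def by auto
      qed
    next
      assume "cc P g (if j = i then i+1 else if j = i+1 then i else j)"
      then obtain p where p: "p \<in> P" "g p = i" using 2 unfolding cc_def by auto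
      show "cc P (rho q P i g) j"
      proof (cases "\<exists>y\<in>P. p < y \<and> g y = i+1")
        case False thus ?thesis using 2 p R[OF p(1)] unfolding cc_def by auto
      next
        case True
        then obtain y where y: "y \<in> P" "p < y" "g y = i+1" by blast
        have "rho q P i g y = i+1" using R[OF y(1)] y p by auto
        thus ?thesis using 2 y unfolding cc_def by auto
      qed
    qed
  next
    case 3
    have "\<And>p. p \<in> P \<Longrightarrow> rho q P i g p = j \<longleftrightarrow> g p = j" using R 3 by auto
    thus ?thesis using 3 unfolding cc_def by auto
  qed
qed

lemma iter:
  assumes f: "f \<in> Inc q P" and k: "k + 1 \<le> q"
  shows "foldl (\<lambda>g i. rho q P i g) f [1..<Suc k] \<in> Inc q P \<and>
    (\<forall>j. cc P (foldl (\<lambda>g i. rho q P i g) f [1..<Suc k]) j =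
         cc P f (if 1 \<le> j \<and> j \<le> k then j+1 else if j = k+1 then 1 else j))"
  using k
proof (induction k)
  case 0
  then show ?case using f by simp
next
  case (Suc k)
  let ?G = "foldl (\<lambda>g i. rho q P i g) f [1..<Suc k]"
  have IH: "?G \<in> Inc q P" "\<And>j. cc P ?G j = cc P f (if 1 \<le> j \<and> j \<le> k then j+1 else if j = k+1 then 1 else j)"
    using Suc by auto
  have eq: "foldl (\<lambda>g i. rho q P i g) f [1..<Suc (Suc k)] = rho q P (Suc k) ?G"
    by simp
  have i: "1 \<le> Suc k" "Suc k + 1 \<le> q" using Suc.prems by auto
  have A: "rho q P (Suc k) ?G \<in> Inc q P" by (rule rho_Inc[OF IH(1) i])
  have B: "cc P (rho q P (Suc k) ?G) j = cc P f (if 1 \<le> j \<and> j \<le> Suc k then j+1 else if j = Suc k+1 then 1 else j)" for j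
    unfolding rho_cc[OF IH(1) i] IH(2) by (cases "j = Suc k"; cases "j = Suc k + 1"; simp)
  show ?case unfolding eq using A B by blast
qed

theorem lemma3p9:
  fixes P :: "'a::order set" and q :: nat and f :: "'a \<Rightarrow> nat" and a :: "nat list"
  assumes "finite P" and "q \<ge> 1" and "f \<in> Inc q P"
    and "Con q P f = a"
  shows "Con q P (IncPro q P f) = tl a @ [hd a]"
proof -
  obtain k where k: "q = Suc k" using assms(2) by (cases q) auto
  define s where "s = (\<lambda>j::nat. if 1 \<le> j \<and> j \<le> k then j+1 else if j = k+1 then 1 else j)"
  have I: "\<And>j. cc P (IncPro q P f) j = cc P f (s j)"
    using iter[OF assms(3), of k] k unfolding IncPro_def s_def by auto
  define h where "h = (\<lambda>i. if cc P f i then 1 else (0::nat))"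
  have Cf: "Con q P f = map h [1..<q+1]" unfolding Con_def cc_def h_def by simp
  have Cg: "Con q P (IncPro q P f) = map (\<lambda>j. h (s j)) [1..<q+1]"
    unfolding Con_def h_def using I unfolding cc_def by presburger
  have u: "[1..<q+1] = 1 # [2..<q+1]" using k by (simp add: upt_conv_Cons numeral_2_eq_2)
  have u2: "[1..<q+1] = [1..<Suc k] @ [Suc k]" using k by simp
  have "map (\<lambda>j. h (s j)) [1..<Suc k] = map (\<lambda>j. h (Suc j)) [1..<Suc k]"
    by (rule map_cong) (auto simp: s_def)
  also have "\<dots> = map h (map Suc [1..<Suc k])" by simp
  also have "\<dots> = map h [2..<q+1]" using k by (simp only: map_Suc_upt numeral_2_eq_2) simp
  finally have m: "map (\<lambda>j. h (s j)) [1..<Suc k] = map h [2..<q+1]" .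
  have sk: "s (Suc k) = 1" by (simp add: s_def)
  have g: "Con q P (IncPro q P f) = map h [2..<q+1] @ [h 1]"
    unfolding Cg u2 map_append m using sk by simp
  have fa: "a = h 1 # map h [2..<q+1]"
    unfolding assms(4)[symmetric] Cf u by simp
  show ?thesis unfolding g fa by simp
qed

end
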